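(* Let $N$ be a natural number, $\delta\subseteq{}^{\underline N}2$ and $0<k<N$. Then $\mathrm{HN}(\delta)>k$ if and only if there is $\delta^*\subseteq{}^{\underline N}2$ such that $\delta\preceq\delta^*$ and the elements of $\delta^*$ have pairwise disjoint domains, each of size $k$. In particular, if there is a $k$-selector for $\delta$, then $\mathrm{HN}(\delta)\geq k+1$.
   Context: $N=\{0,\ldots,N-1\}$; ${}^{\underline N}2$ is the set of all partial functions $\sigma$ with $\mathrm{dom}(\sigma)\subseteq N$ and values in $\{0,1\}$ (the empty function included). For $\delta_1,\delta_2\subseteq{}^{\underline N}2$, $\delta_1\preceq\delta_2$ means that for every $\sigma\in\delta_1$ there is $\rho\in\delta_2$ with $\rho\subseteq\sigma$. For $\delta\subseteq{}^{\underline N}2$, $\mathrm{hn}(\delta)$ is the maximum of $k+1$ over those $k\in\{0,\ldots,N-1\}$ such that for every $\delta'\subseteq\delta$ there is $\delta''\subseteq\delta'$ whose elements have pairwise disjoint domains and $|\bigcup_{\sigma\in\delta''}\mathrm{dom}(\sigma)|\geq k|\delta'|$; and $\mathrm{HN}(\delta)=\max\{\mathrm{hn}(\delta'):\delta'\subseteq{}^{\underline N}2,\ \delta\preceq\delta'\}$. A $k$-selector for $\delta$ is a function $F$ from $\delta$ to $k$-element subsets of $N$ such that for $\sigma,\rho\in\delta$: $F(\sigma)\subseteq\mathrm{dom}(\sigma)$, and $F(\sigma)\cap F(\rho)=\emptyset$ iff $\sigma\neq\rho$. *)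

theory Defs
  imports Main
begin

text \<open>Partial functions from N = {0..<N} to 2 = bool, as maps; the subset
relation on partial functions is map_le.\<close>

definition partfuns :: "nat \<Rightarrow> (nat \<rightharpoonup> bool) set" where
  "partfuns N = {\<sigma>. dom \<sigma> \<subseteq> {..<N}}"

definition prec :: "(nat \<rightharpoonup> bool) set \<Rightarrow> (nat \<rightharpoonup> bool) set \<Rightarrow> bool" where
  "prec \<delta>1 \<delta>2 \<longleftrightarrow> (\<forall>\<sigma>\<in>\<delta>1. \<exists>\<rho>\<in>\<delta>2. \<rho> \<subseteq>\<^sub>m \<sigma>)"

definition disjoint_doms :: "(nat \<rightharpoonup> bool) set \<Rightarrow> bool" where
  "disjoint_doms \<delta> \<longleftrightarrow> (\<forall>\<sigma>\<in>\<delta>. \<forall>\<rho>\<in>\<delta>. \<sigma> \<noteq> \<rho> \<longrightarrow> dom \<sigma> \<inter> dom \<rho> = {})"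

definition hn_good :: "nat \<Rightarrow> (nat \<rightharpoonup> bool) set \<Rightarrow> bool" where
  "hn_good k \<delta> \<longleftrightarrow> (\<forall>\<delta>'\<subseteq>\<delta>. \<exists>\<delta>''\<subseteq>\<delta>'. disjoint_doms \<delta>'' \<and>
       card (\<Union>\<sigma>\<in>\<delta>''. dom \<sigma>) \<ge> k * card \<delta>')"

definition hn :: "nat \<Rightarrow> (nat \<rightharpoonup> bool) set \<Rightarrow> nat" where
  "hn N \<delta> = Max {k + 1 | k. k < N \<and> hn_good k \<delta>}"

definition HN :: "nat \<Rightarrow> (nat \<rightharpoonup> bool) set \<Rightarrow> nat" where
  "HN N \<delta> = Max {hn N \<delta>' | \<delta>'. \<delta>' \<subseteq> partfuns N \<and> prec \<delta> \<delta>'}"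

definition selector :: "nat \<Rightarrow> nat \<Rightarrow> (nat \<rightharpoonup> bool) set \<Rightarrow> ((nat \<rightharpoonup> bool) \<Rightarrow> nat set) \<Rightarrow> bool" where
  "selector N k \<delta> F \<longleftrightarrow>
     (\<forall>\<sigma>\<in>\<delta>. F \<sigma> \<subseteq> {..<N} \<and> card (F \<sigma>) = k \<and> F \<sigma> \<subseteq> dom \<sigma>) \<and>
     (\<forall>\<sigma>\<in>\<delta>. \<forall>\<rho>\<in>\<delta>. F \<sigma> \<inter> F \<rho> = {} \<longleftrightarrow> \<sigma> \<noteq> \<rho>)"

end

theory Submission
  imports Defs
begin

lemma hall1:
  assumes "finite I" "\<forall>i\<in>I. finite (A i)" "\<forall>S\<subseteq>I. card S \<le> card (\<Union>(A ` S))"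
  shows "\<exists>f. inj_on f I \<and> (\<forall>i\<in>I. f i \<in> A i)"
  using assms
proof (induction "card I" arbitrary: I A rule: less_induct)
  case less
  show ?case
  proof (cases "I = {}")
    case True then show ?thesis by auto
  next
    case nonempty: False
    show ?thesis
    proof (cases "\<exists>S. S \<noteq> {} \<and> S \<subset> I \<and> card (\<Union>(A ` S)) \<le> card S")
      case True
      then obtain S where S: "S \<noteq> {}" "S \<subset> I" "card (\<Union>(A ` S)) \<le> card S" by blast
      have finS: "finite S" using S(2) less.prems(1) finite_subset by blast
      have cS: "card S < card I" using S(2) less.prems(1) psubset_card_mono by blast
      obtain f1 where f1: "inj_on f1 S" "\<forall>i\<in>S. f1 i \<in> A i"
      proof -
        have "\<forall>i\<in>S. finite (A i)" using less.prems(2) S(2) by auto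
        moreover have "\<forall>T\<subseteq>S. card T \<le> card (\<Union>(A ` T))" using less.prems(3) S(2) by auto
        ultimately show ?thesis using less.hyps[OF cS finS, of A] that by blast
      qed
      define U where "U = \<Union>(A ` S)"
      have finU: "finite U" unfolding U_def using finS less.prems(2) S(2) by auto
      have cU: "card U = card S" using S(3) less.prems(3) S(2) unfolding U_def by (meson dual_order.antisym psubset_imp_subset)
      have cIS: "card (I - S) < card I"
      proof -
        have "card (I - S) = card I - card S" using S(2) finS by (simp add: card_Diff_subset psubset_imp_subset)
        moreover have "card S > 0" using S(1) finS by auto
        ultimately show ?thesis using cS by linarith
      qed
      have hall2: "\<forall>T\<subseteq>I - S. card T \<le> card (\<Union>((\<lambda>i. A i - U) ` T))"
      proof (intro allI impI)
        fix T assume T: "T \<subseteq> I - S"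
        have finT: "finite T" using T less.prems(1) finite_subset by blast
        have fin2: "finite (\<Union>((\<lambda>i. A i - U) ` T))" using finT T less.prems(2) by auto
        have "card T + card S = card (T \<union> S)" using T finT finS by (subst card_Un_disjoint) auto
        also have "\<dots> \<le> card (\<Union>(A ` (T \<union> S)))" using less.prems(3) T S(2) by (metis Diff_subset Un_subset_iff psubset_imp_subset subset_trans)
        also have "\<dots> \<le> card (\<Union>((\<lambda>i. A i - U) ` T) \<union> U)"
          by (rule card_mono) (use fin2 finU U_def in auto)
        also have "\<dots> \<le> card (\<Union>((\<lambda>i. A i - U) ` T)) + card U" by (rule card_Un_le)
        finally show "card T \<le> card (\<Union>((\<lambda>i. A i - U) ` T))" using cU by linarith
      qed
      obtain f2 where f2: "inj_on f2 (I - S)" "\<forall>i\<in>I - S. f2 i \<in> A i - U"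
        using less.hyps[OF cIS _ _ hall2] less.prems(1,2) by auto
      define f where "f i = (if i \<in> S then f1 i else f2 i)" for i
      have "inj_on f I"
      proof (rule inj_onI)
        fix i j assume ij: "i \<in> I" "j \<in> I" "f i = f j"
        have inU: "f1 i \<in> U" if "i \<in> S" for i using f1(2) that unfolding U_def by blast
        have ninU: "f2 i \<notin> U" if "i \<in> I" "i \<notin> S" for i using f2(2) that by blast
        show "i = j"
        proof (cases "i \<in> S")
          case True
          show ?thesis
          proof (cases "j \<in> S")
            case True
            then show ?thesis using \<open>i \<in> S\<close> ij(3) f1(1) unfolding f_def inj_on_def by auto
          next
            case False
            then show ?thesis using \<open>i \<in> S\<close> ij inU[of i] ninU[of j] unfolding f_def by auto
          qed
        next
          case False
          show ?thesis
          proof (cases "j \<in> S")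
            case True
            then show ?thesis using \<open>i \<notin> S\<close> ij inU[of j] ninU[of i] unfolding f_def by auto
          next
            case False
            then show ?thesis using \<open>i \<notin> S\<close> ij f2(1) unfolding f_def inj_on_def by auto
          qed
        qed
      qed
      moreover have "\<forall>i\<in>I. f i \<in> A i" using f1 f2 unfolding f_def by auto
      ultimately show ?thesis by blast
    next
      case False
      then have strict: "\<And>S. S \<noteq> {} \<Longrightarrow> S \<subset> I \<Longrightarrow> card S < card (\<Union>(A ` S))" using not_le by blast
      obtain i0 where i0: "i0 \<in> I" using nonempty by blast
      have "card {i0} \<le> card (\<Union>(A ` {i0}))" using less.prems(3) i0 by blast
      then have "card {i0} \<le> card (A i0)" by simp
      then have "A i0 \<noteq> {}" by auto
      then obtain x where x: "x \<in> A i0" by blast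
      have cI: "card (I - {i0}) < card I" using i0 less.prems(1) by (meson card_Diff1_less)
      have hall2: "\<forall>T\<subseteq>I - {i0}. card T \<le> card (\<Union>((\<lambda>i. A i - {x}) ` T))"
      proof (intro allI impI)
        fix T assume T: "T \<subseteq> I - {i0}"
        show "card T \<le> card (\<Union>((\<lambda>i. A i - {x}) ` T))"
        proof (cases "T = {}")
          case True then show ?thesis by simp
        next
          case False
          have finT: "finite T" using T less.prems(1) finite_subset by blast
          have fin2: "finite (\<Union>((\<lambda>i. A i - {x}) ` T))" using finT T less.prems(2) by auto
          have "T \<subset> I" using T i0 by blast
          then have "card T < card (\<Union>(A ` T))" using strict False by blast
          also have "\<dots> \<le> card (insert x (\<Union>((\<lambda>i. A i - {x}) ` T)))"
            by (rule card_mono) (use fin2 in auto)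
          also have "\<dots> \<le> Suc (card (\<Union>((\<lambda>i. A i - {x}) ` T)))" using fin2 card_insert_if[OF fin2, of x] by (metis le_SucI order_refl)
          finally show ?thesis by simp
        qed
      qed
      obtain f2 where f2: "inj_on f2 (I - {i0})" "\<forall>i\<in>I - {i0}. f2 i \<in> A i - {x}"
        using less.hyps[OF cI _ _ hall2] less.prems(1,2) by auto
      define f where "f = f2(i0 := x)"
      have "inj_on f I"
      proof (rule inj_onI)
        fix i j assume ij: "i \<in> I" "j \<in> I" "f i = f j"
        show "i = j"
          using ij f2 unfolding f_def inj_on_def
          by (cases "i = i0"; cases "j = i0") auto
      qed
      moreover have "\<forall>i\<in>I. f i \<in> A i" using f2 x unfolding f_def by auto
      ultimately show ?thesis by blast
    qed
  qed
qed


lemma hall_k: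
  assumes "finite I" "\<forall>i\<in>I. finite (A i)" "\<forall>S\<subseteq>I. k * card S \<le> card (\<Union>(A ` S))"
  shows "\<exists>F. (\<forall>i\<in>I. F i \<subseteq> A i \<and> card (F i) = k) \<and> (\<forall>i\<in>I. \<forall>j\<in>I. i \<noteq> j \<longrightarrow> F i \<inter> F j = {})"
proof -
  define J where "J = I \<times> {..<k}"
  define B where "B p = A (fst p)" for p :: "'a \<times> nat"
  have finJ: "finite J" using assms(1) unfolding J_def by auto
  have finB: "\<forall>p\<in>J. finite (B p)" using assms(2) unfolding J_def B_def by auto
  have hallJ: "\<forall>S\<subseteq>J. card S \<le> card (\<Union>(B ` S))"
  proof (intro allI impI)
    fix S assume S: "S \<subseteq> J"
    have PI: "fst ` S \<subseteq> I" using S unfolding J_def by auto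
    have finP: "finite (fst ` S)" using PI assms(1) finite_subset by blast
    have "S \<subseteq> fst ` S \<times> {..<k}" using S unfolding J_def by force
    then have "card S \<le> card (fst ` S \<times> {..<k})" using finP by (intro card_mono) auto
    also have "\<dots> = k * card (fst ` S)" by (simp add: card_cartesian_product)
    also have "\<dots> \<le> card (\<Union>(A ` (fst ` S)))" using assms(3) PI by blast
    also have "\<Union>(A ` (fst ` S)) = \<Union>(B ` S)" unfolding B_def by auto
    finally show "card S \<le> card (\<Union>(B ` S))" .
  qed
  obtain f where f: "inj_on f J" "\<forall>p\<in>J. f p \<in> B p" using hall1[OF finJ finB hallJ] by blast
  define F where "F i = (\<lambda>j. f (i, j)) ` {..<k}" for i
  have "\<forall>i\<in>I. F i \<subseteq> A i \<and> card (F i) = k"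
  proof
    fix i assume i: "i \<in> I"
    have "F i \<subseteq> A i" using f(2) i unfolding F_def B_def J_def by auto
    moreover have "inj_on (\<lambda>j. f (i, j)) {..<k}"
      using f(1) i unfolding inj_on_def J_def by auto
    then have "card (F i) = k" unfolding F_def by (simp add: card_image)
    ultimately show "F i \<subseteq> A i \<and> card (F i) = k" by blast
  qed
  moreover have "\<forall>i\<in>I. \<forall>j\<in>I. i \<noteq> j \<longrightarrow> F i \<inter> F j = {}"
    using f(1) unfolding F_def inj_on_def J_def by blast
  ultimately show ?thesis by blast
qed


lemma finite_partfuns: "finite (partfuns N)"
proof -
  have "partfuns N = (\<Union>A\<in>Pow {..<N}. {m :: nat \<rightharpoonup> bool. dom m = A \<and> ran m \<subseteq> UNIV})"
    unfolding partfuns_def by auto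
  moreover have "finite (\<Union>A\<in>Pow {..<N}. {m :: nat \<rightharpoonup> bool. dom m = A \<and> ran m \<subseteq> UNIV})"
  proof (intro finite_UN_I)
    show "finite (Pow {..<N::nat})" by simp
    fix A :: "nat set" assume "A \<in> Pow {..<N}"
    then have "finite A" using finite_subset by auto
    then show "finite {m :: nat \<rightharpoonup> bool. dom m = A \<and> ran m \<subseteq> UNIV}"
      using finite_set_of_finite_maps[of A "UNIV :: bool set"] by simp
  qed
  ultimately show ?thesis by simp
qed

lemma hn_good_0: "hn_good 0 \<delta>"
  unfolding hn_good_def by (auto intro!: exI[of _ "{}"] simp: disjoint_doms_def)

lemma hn_good_mono: "k \<le> k' \<Longrightarrow> hn_good k' \<delta> \<Longrightarrow> hn_good k \<delta>"
  unfolding hn_good_def by (meson le_trans mult_le_mono1)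

lemma hn_set_props:
  assumes "0 < N"
  shows "finite {k + 1 | k. k < N \<and> hn_good k \<delta>}" "1 \<in> {k + 1 | k. k < N \<and> hn_good k \<delta>}"
proof -
  have "{k + 1 | k. k < N \<and> hn_good k \<delta>} \<subseteq> {..N}" by auto
  then show "finite {k + 1 | k. k < N \<and> hn_good k \<delta>}" using finite_subset by blast
  show "1 \<in> {k + 1 | k. k < N \<and> hn_good k \<delta>}" using assms hn_good_0 by force
qed

lemma hn_le: "0 < N \<Longrightarrow> hn N \<delta> \<le> N"
proof -
  assume N: "0 < N"
  have "hn N \<delta> \<in> {k + 1 | k. k < N \<and> hn_good k \<delta>}"
    unfolding hn_def using hn_set_props[OF N] by (intro Max_in) auto
  then show ?thesis by auto
qed

lemma hn_ge: "k < N \<Longrightarrow> hn_good k \<delta> \<Longrightarrow> k + 1 \<le> hn N \<delta>"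
  unfolding hn_def using hn_set_props[of N \<delta>] by (intro Max_ge) auto

lemma hn_gt: "0 < N \<Longrightarrow> k < hn N \<delta> \<Longrightarrow> \<exists>k'. k' < N \<and> hn_good k' \<delta> \<and> k \<le> k'"
proof -
  assume N: "0 < N" and k: "k < hn N \<delta>"
  have "hn N \<delta> \<in> {k + 1 | k. k < N \<and> hn_good k \<delta>}"
    unfolding hn_def using hn_set_props[OF N] by (intro Max_in) auto
  then show ?thesis using k by auto
qed

lemma HN_set_props:
  assumes "0 < N"
  shows "finite {hn N \<delta>' | \<delta>'. \<delta>' \<subseteq> partfuns N \<and> prec \<delta> \<delta>'}"
    "{hn N \<delta>' | \<delta>'. \<delta>' \<subseteq> partfuns N \<and> prec \<delta> \<delta>'} \<noteq> {}"
proof -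
  have "{hn N \<delta>' | \<delta>'. \<delta>' \<subseteq> partfuns N \<and> prec \<delta> \<delta>'} \<subseteq> {..N}" using hn_le[OF assms] by auto
  then show "finite {hn N \<delta>' | \<delta>'. \<delta>' \<subseteq> partfuns N \<and> prec \<delta> \<delta>'}" using finite_subset by blast
  have "{Map.empty} \<subseteq> partfuns N \<and> prec \<delta> {Map.empty}"
    unfolding partfuns_def prec_def by auto
  then show "{hn N \<delta>' | \<delta>'. \<delta>' \<subseteq> partfuns N \<and> prec \<delta> \<delta>'} \<noteq> {}" by blast
qed

lemma rhs_imp:
  assumes "0 < k" "k < N" "\<delta>s \<subseteq> partfuns N" "prec \<delta> \<delta>s" "disjoint_doms \<delta>s"
    "\<forall>\<sigma>\<in>\<delta>s. card (dom \<sigma>) = k"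
  shows "k < HN N \<delta>"
proof -
  have N: "0 < N" using assms(2,3) by linarith
  have "hn_good k \<delta>s"
    unfolding hn_good_def
  proof (intro allI impI)
    fix \<delta>' assume d: "\<delta>' \<subseteq> \<delta>s"
    have fin: "finite \<delta>'" by (rule finite_subset[OF subset_trans[OF d assms(3)] finite_partfuns])
    have findom: "\<forall>\<sigma>\<in>\<delta>'. finite (dom \<sigma>)"
    proof
      fix \<sigma> assume "\<sigma> \<in> \<delta>'"
      then have "dom \<sigma> \<subseteq> {..<N}" using d assms(3) unfolding partfuns_def by blast
      then show "finite (dom \<sigma>)" using finite_subset by blast
    qed
    have "card (\<Union>\<sigma>\<in>\<delta>'. dom \<sigma>) = (\<Sum>\<sigma>\<in>\<delta>'. card (dom \<sigma>))"
    proof (rule card_UN_disjoint[OF fin findom])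
      show "\<forall>i\<in>\<delta>'. \<forall>j\<in>\<delta>'. i \<noteq> j \<longrightarrow> dom i \<inter> dom j = {}"
        using assms(5) d unfolding disjoint_doms_def by blast
    qed
    also have "\<dots> = (\<Sum>\<sigma>\<in>\<delta>'. k)" by (rule sum.cong) (use assms(6) d in blast)+
    also have "\<dots> = k * card \<delta>'" by simp
    finally have "card (\<Union>\<sigma>\<in>\<delta>'. dom \<sigma>) \<ge> k * card \<delta>'" by simp
    moreover have "disjoint_doms \<delta>'" using assms(5) d unfolding disjoint_doms_def by blast
    ultimately show "\<exists>\<delta>''\<subseteq>\<delta>'. disjoint_doms \<delta>'' \<and> k * card \<delta>' \<le> card (\<Union>\<sigma>\<in>\<delta>''. dom \<sigma>)"
      by blast
  qed
  then have "k + 1 \<le> hn N \<delta>s" using hn_ge assms(2) by blast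
  also have "hn N \<delta>s \<le> HN N \<delta>" unfolding HN_def
    using HN_set_props[OF N, of \<delta>] assms(3,4) by (intro Max_ge) auto
  finally show ?thesis by simp
qed

lemma restrict_le: "\<sigma> |` A \<subseteq>\<^sub>m \<sigma>"
  unfolding map_le_def restrict_map_def by (auto split: if_splits)

lemma from_F:
  assumes "\<delta>' \<subseteq> partfuns N" "\<forall>\<sigma>\<in>\<delta>'. F \<sigma> \<subseteq> dom \<sigma> \<and> card (F \<sigma>) = k"
    "\<forall>\<sigma>\<in>\<delta>'. \<forall>\<rho>\<in>\<delta>'. \<sigma> \<noteq> \<rho> \<longrightarrow> F \<sigma> \<inter> F \<rho> = {}" "prec \<delta> \<delta>'"
  shows "\<exists>\<delta>s. \<delta>s \<subseteq> partfuns N \<and> prec \<delta> \<delta>s \<and> disjoint_doms \<delta>s \<and> (\<forall>\<sigma>\<in>\<delta>s. card (dom \<sigma>) = k)"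
proof (intro exI conjI)
  let ?D = "(\<lambda>\<sigma>. \<sigma> |` F \<sigma>) ` \<delta>'"
  have dm: "dom (\<sigma> |` F \<sigma>) = F \<sigma>" if "\<sigma> \<in> \<delta>'" for \<sigma> using assms(2) that by auto
  have "dom (\<sigma> |` F \<sigma>) \<subseteq> dom \<sigma>" for \<sigma> by auto
  then show "?D \<subseteq> partfuns N" using assms(1) unfolding partfuns_def by blast
  show "prec \<delta> ?D" using assms(4) unfolding prec_def
    by (meson image_eqI map_le_trans restrict_le)
  show "disjoint_doms ?D" unfolding disjoint_doms_def
  proof (intro ballI impI)
    fix a b assume ab: "a \<in> ?D" "b \<in> ?D" "a \<noteq> b"
    then obtain \<sigma> \<rho> where sr: "\<sigma> \<in> \<delta>'" "\<rho> \<in> \<delta>'" "a = \<sigma> |` F \<sigma>" "b = \<rho> |` F \<rho>" by blast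
    then have "\<sigma> \<noteq> \<rho>" using ab(3) by blast
    then show "dom a \<inter> dom b = {}" using dm sr assms(3) by metis
  qed
  show "\<forall>\<sigma>\<in>?D. card (dom \<sigma>) = k" using dm assms(2) by auto
qed

theorem proposition6p14:
  fixes N k :: nat and \<delta> :: "(nat \<rightharpoonup> bool) set"
  assumes "\<delta> \<subseteq> partfuns N" and "0 < k" and "k < N"
  shows "(HN N \<delta> > k \<longleftrightarrow>
            (\<exists>\<delta>s. \<delta>s \<subseteq> partfuns N \<and> prec \<delta> \<delta>s \<and> disjoint_doms \<delta>s \<and>
                  (\<forall>\<sigma>\<in>\<delta>s. card (dom \<sigma>) = k)))
       \<and> ((\<exists>F. selector N k \<delta> F) \<longrightarrow> HN N \<delta> \<ge> k + 1)"
proof -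
  have N: "0 < N" using assms(2,3) by linarith
  have fwd: "\<exists>\<delta>s. \<delta>s \<subseteq> partfuns N \<and> prec \<delta> \<delta>s \<and> disjoint_doms \<delta>s \<and> (\<forall>\<sigma>\<in>\<delta>s. card (dom \<sigma>) = k)"
    if gt: "HN N \<delta> > k"
  proof -
    have "HN N \<delta> \<in> {hn N \<delta>' | \<delta>'. \<delta>' \<subseteq> partfuns N \<and> prec \<delta> \<delta>'}"
      unfolding HN_def using HN_set_props[OF N, of \<delta>] by (intro Max_in) auto
    then obtain \<delta>' where d: "\<delta>' \<subseteq> partfuns N" "prec \<delta> \<delta>'" "HN N \<delta> = hn N \<delta>'" by blast
    then obtain k' where k': "k' < N" "hn_good k' \<delta>'" "k \<le> k'" using hn_gt[OF N, of k \<delta>'] gt by auto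
    have good: "hn_good k \<delta>'" using hn_good_mono[OF k'(3) k'(2)] .
    have fin: "finite \<delta>'" by (rule finite_subset[OF d(1) finite_partfuns])
    have findom: "\<forall>\<sigma>\<in>\<delta>'. finite (dom \<sigma>)"
    proof
      fix \<sigma> assume "\<sigma> \<in> \<delta>'"
      then have "dom \<sigma> \<subseteq> {..<N}" using d(1) unfolding partfuns_def by blast
      then show "finite (dom \<sigma>)" using finite_subset by blast
    qed
    have hall: "\<forall>S\<subseteq>\<delta>'. k * card S \<le> card (\<Union>(dom ` S))"
    proof (intro allI impI)
      fix S assume S: "S \<subseteq> \<delta>'"
      obtain T where T: "T \<subseteq> S" "k * card S \<le> card (\<Union>\<sigma>\<in>T. dom \<sigma>)"
        using good S unfolding hn_good_def by blast
      have "finite S" by (rule finite_subset[OF S fin])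
      then have "finite (\<Union>(dom ` S))" using S findom by (intro finite_UN_I) auto
      then have "card (\<Union>\<sigma>\<in>T. dom \<sigma>) \<le> card (\<Union>(dom ` S))" using T(1) by (intro card_mono) auto
      then show "k * card S \<le> card (\<Union>(dom ` S))" using T(2) by linarith
    qed
    obtain F where F: "\<forall>i\<in>\<delta>'. F i \<subseteq> dom i \<and> card (F i) = k"
      "\<forall>i\<in>\<delta>'. \<forall>j\<in>\<delta>'. i \<noteq> j \<longrightarrow> F i \<inter> F j = {}"
      using hall_k[OF fin findom hall] by (elim exE conjE)
    show ?thesis using from_F[OF d(1) F d(2)] .
  qed
  have bwd: "HN N \<delta> > k" if "\<exists>\<delta>s. \<delta>s \<subseteq> partfuns N \<and> prec \<delta> \<delta>s \<and> disjoint_doms \<delta>s \<and> (\<forall>\<sigma>\<in>\<delta>s. card (dom \<sigma>) = k)"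
    using that by (elim exE conjE) (rule rhs_imp[OF assms(2,3)])
  have sel: "HN N \<delta> \<ge> k + 1" if hs: "\<exists>F. selector N k \<delta> F"
  proof -
    obtain F where F: "selector N k \<delta> F" using hs by blast
    have p: "prec \<delta> \<delta>" unfolding prec_def using map_le_refl by blast
    have f1: "\<forall>\<sigma>\<in>\<delta>. F \<sigma> \<subseteq> dom \<sigma> \<and> card (F \<sigma>) = k" using F unfolding selector_def by blast
    have f2: "\<forall>\<sigma>\<in>\<delta>. \<forall>\<rho>\<in>\<delta>. \<sigma> \<noteq> \<rho> \<longrightarrow> F \<sigma> \<inter> F \<rho> = {}"
      using F unfolding selector_def by (intro ballI impI) simp
    have "\<exists>\<delta>s. \<delta>s \<subseteq> partfuns N \<and> prec \<delta> \<delta>s \<and> disjoint_doms \<delta>s \<and> (\<forall>\<sigma>\<in>\<delta>s. card (dom \<sigma>) = k)"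
      by (rule from_F[OF assms(1) f1 f2 p])
    then have "HN N \<delta> > k" by (rule bwd)
    then show ?thesis by simp
  qed
  show ?thesis
  proof (intro conjI iffI impI)
    show "\<exists>\<delta>s. \<delta>s \<subseteq> partfuns N \<and> prec \<delta> \<delta>s \<and> disjoint_doms \<delta>s \<and> (\<forall>\<sigma>\<in>\<delta>s. card (dom \<sigma>) = k)"
      if "k < HN N \<delta>" using fwd[OF that] .
    show "k < HN N \<delta>" if "\<exists>\<delta>s. \<delta>s \<subseteq> partfuns N \<and> prec \<delta> \<delta>s \<and> disjoint_doms \<delta>s \<and> (\<forall>\<sigma>\<in>\<delta>s. card (dom \<sigma>) = k)"
      using bwd[OF that] .
    show "k + 1 \<le> HN N \<delta>" if "\<exists>F. selector N k \<delta> F" using sel[OF that] .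
  qed
qed

end
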